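(* If some set maximizing $\widehat{re}$ over nonempty subsets of $\mathbb{S}$ has cardinality $k$, then $\{1,2,\dots,k\}$ also maximizes $\widehat{re}$ over nonempty subsets of $\mathbb{S}$.
   Context: Sellers $\mathbb{S}=\{1,\dots,n\}$ with product qualities $\theta_1\ge\theta_2\ge\dots\ge\theta_n\ge0$. $W$ is the Lambert W function on $[0,\infty)$ ($W(x)e^{W(x)}=x$) and $w_i=W(e^{\theta_i-1})$, so $w_1\ge\dots\ge w_n>0$. For nonempty $S\subseteq\mathbb{S}$, the Cournot-equilibrium revenue when $S$ is displayed is $\widehat{re}(S)=\frac{\sum_{i\in S}(w_i^2+w_i)}{1+\sum_{i\in S}w_i}$. *)

theory Defs
  imports "HOL-Analysis.Analysis"
begin

definition lambertW :: "real \<Rightarrow> real" where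
  "lambertW x = (THE w. 0 \<le> w \<and> w * exp w = x)"

definition wq :: "(nat \<Rightarrow> real) \<Rightarrow> nat \<Rightarrow> real" where
  "wq \<theta> i = lambertW (exp (\<theta> i - 1))"

text \<open>Cournot-equilibrium revenue when the set S of sellers is displayed.\<close>
definition re_hat :: "(nat \<Rightarrow> real) \<Rightarrow> nat set \<Rightarrow> real" where
  "re_hat \<theta> S = (\<Sum>i\<in>S. (wq \<theta> i)^2 + wq \<theta> i) / (1 + (\<Sum>i\<in>S. wq \<theta> i))"

definition is_opt :: "(nat \<Rightarrow> real) \<Rightarrow> nat \<Rightarrow> nat set \<Rightarrow> bool" where
  "is_opt \<theta> n S \<longleftrightarrow> S \<subseteq> {1..n} \<and> S \<noteq> {} \<and>
     (\<forall>T. T \<subseteq> {1..n} \<and> T \<noteq> {} \<longrightarrow> re_hat \<theta> T \<le> re_hat \<theta> S)"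

end

theory Submission
  imports Defs
begin

lemma we_strict: "0 \<le> u \<Longrightarrow> u < v \<Longrightarrow> u * exp u < v * exp (v::real)"
proof -
  assume a: "0 \<le> u" "u < v"
  have "u * exp u \<le> u * exp v" using a by (simp add: mult_left_mono)
  also have "\<dots> < v * exp v" using a by simp
  finally show ?thesis .
qed

lemma lambertW_spec:
  assumes "x > 0"
  shows "0 < lambertW x \<and> lambertW x * exp (lambertW x) = x"
proof -
  have "\<exists>w\<ge>0. w \<le> x \<and> w * exp w = x"
    apply (rule IVT[where f="\<lambda>w. w * exp w"])
    using assms by (auto intro!: continuous_intros)
  then obtain w where w: "0 \<le> w" "w * exp w = x" by blast
  have uniq: "\<And>v. 0 \<le> v \<and> v * exp v = x \<Longrightarrow> v = w"
  proof -
    fix v assume v: "0 \<le> v \<and> v * exp v = x"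
    show "v = w"
    proof (rule ccontr)
      assume "v \<noteq> w"
      hence "v < w \<or> w < v" by linarith
      thus False using we_strict[of v w] we_strict[of w v] v w by auto
    qed
  qed
  have "lambertW x = w" unfolding lambertW_def
  proof (rule the_equality)
    show "0 \<le> w \<and> w * exp w = x" using w by simp
    show "\<And>v. 0 \<le> v \<and> v * exp v = x \<Longrightarrow> v = w" by (rule uniq)
  qed
  moreover have "w \<noteq> 0" using w assms by auto
  ultimately show ?thesis using w by auto
qed

lemma lambertW_mono:
  assumes "0 < x" "x \<le> y" shows "lambertW x \<le> lambertW y"
proof (rule ccontr)
  assume "\<not> ?thesis"
  hence "lambertW y < lambertW x" by simp
  moreover have "0 < lambertW y" using lambertW_spec assms by auto
  ultimately have "lambertW y * exp (lambertW y) < lambertW x * exp (lambertW x)"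
    using we_strict by auto
  thus False using lambertW_spec[of x] lambertW_spec[of y] assms by auto
qed

lemma wq_pos: "0 < wq \<theta> i"
  unfolding wq_def using lambertW_spec by auto

lemma wq_mono: "\<theta> j \<le> \<theta> i \<Longrightarrow> wq \<theta> j \<le> wq \<theta> i"
  unfolding wq_def by (rule lambertW_mono) auto

theorem lemma8:
  fixes n :: nat and \<theta> :: "nat \<Rightarrow> real" and S :: "nat set" and k :: nat
  assumes "n \<ge> 1"
    and "\<And>i j. 1 \<le> i \<Longrightarrow> i \<le> j \<Longrightarrow> j \<le> n \<Longrightarrow> \<theta> j \<le> \<theta> i"
    and "\<And>i. 1 \<le> i \<Longrightarrow> i \<le> n \<Longrightarrow> 0 \<le> \<theta> i"
    and "is_opt \<theta> n S"
    and "card S = k"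
  shows "is_opt \<theta> n {1..k}"
proof -
  define w where "w = wq \<theta>"
  define a where "a = (\<lambda>i. (w i)^2 + w i)"
  have wpos: "\<And>i. 0 < w i" unfolding w_def by (rule wq_pos)
  have Ssub: "S \<subseteq> {1..n}" and Sne: "S \<noteq> {}"
    and Sopt: "\<And>T. T \<subseteq> {1..n} \<Longrightarrow> T \<noteq> {} \<Longrightarrow> re_hat \<theta> T \<le> re_hat \<theta> S"
    using assms(4) unfolding is_opt_def by auto
  have finS: "finite S" using Ssub finite_subset by blast
  have k1: "k \<ge> 1" using assms(5) finS Sne by (metis One_nat_def Suc_leI card_gt_0_iff)
  have kn: "k \<le> n" using assms(5) card_mono[OF _ Ssub] by simp
  define R where "R = re_hat \<theta> S"
  have pos: "\<And>T. finite T \<Longrightarrow> 0 < 1 + sum w T"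
    using wpos by (simp add: add_pos_nonneg sum_nonneg less_imp_le)
  have reT: "\<And>T. re_hat \<theta> T = sum a T / (1 + sum w T)"
    unfolding re_hat_def a_def w_def by simp
  have RS: "sum a S = R * (1 + sum w S)"
    using pos[OF finS] unfolding R_def reT by (simp add: field_simps)
  have key: "\<And>i. i \<in> S \<Longrightarrow> R \<le> w i + 1"
  proof -
    fix i assume iS: "i \<in> S"
    have "R * w i \<le> a i"
    proof (cases "S - {i} = {}")
      case True
      hence "S = {i}" using iS by auto
      hence "R = a i / (1 + w i)" unfolding R_def reT by simp
      moreover have "a i = w i * (1 + w i)" unfolding a_def by (simp add: power2_eq_square algebra_simps)
      ultimately have "R = w i" using wpos[of i] by (simp add: add_pos_pos)
      thus ?thesis unfolding a_def using wpos[of i] by (simp add: power2_eq_square)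
    next
      case False
      have "re_hat \<theta> (S - {i}) \<le> R" unfolding R_def using Sopt[of "S - {i}"] Ssub False by auto
      hence "sum a (S - {i}) / (1 + sum w (S - {i})) \<le> R" by (simp add: reT)
      hence "sum a (S - {i}) \<le> R * (1 + sum w (S - {i}))"
        using pos[of "S - {i}"] finS by (simp add: divide_le_eq)
      moreover have "sum a (S - {i}) = sum a S - a i" "sum w (S - {i}) = sum w S - w i"
        using finS iS by (simp_all add: sum_diff1)
      ultimately show ?thesis using RS by (simp add: algebra_simps)
    qed
    hence "R * w i \<le> (w i + 1) * w i" unfolding a_def by (simp add: power2_eq_square algebra_simps)
    thus "R \<le> w i + 1" using wpos[of i] by (simp add: mult_le_cancel_right_pos)
  qed
  define g where "g = (\<lambda>i. a i - R * w i)"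
  define S' where "S' = {1..k}"
  have sumgS: "sum g S = R"
    unfolding g_def using RS by (simp add: sum_subtractf sum_distrib_left[symmetric] algebra_simps)
  have c: "card (S - S') = card (S' - S)"
  proof -
    have "card (S - S') = card S - card (S \<inter> S')" using finS by (intro card_Diff_subset_Int) simp
    moreover have "card (S' - S) = card S' - card (S' \<inter> S)" unfolding S'_def
      by (intro card_Diff_subset_Int) simp
    ultimately show ?thesis unfolding S'_def using assms(5) by (simp add: Int_commute)
  qed
  obtain h where h: "bij_betw h (S - S') (S' - S)"
    using finite_same_card_bij[OF _ _ c] finS unfolding S'_def by auto
  have ge: "\<And>i. i \<in> S - S' \<Longrightarrow> g i \<le> g (h i)"
  proof -
    fix i assume i: "i \<in> S - S'"
    have hi: "h i \<in> S' - S" using h i bij_betwE by blast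
    have "h i \<le> k" "1 \<le> h i" using hi unfolding S'_def by auto
    moreover have "k < i" "i \<le> n" using i Ssub unfolding S'_def using k1 by auto
    ultimately have "\<theta> i \<le> \<theta> (h i)" using assms(2) by auto
    hence wle: "w i \<le> w (h i)" unfolding w_def by (rule wq_mono)
    have Ri: "R \<le> w i + 1" using key i by auto
    have "g (h i) - g i = (w (h i) - w i) * (w (h i) + w i + 1 - R)"
      unfolding g_def a_def by (simp add: algebra_simps power2_eq_square)
    also have "\<dots> \<ge> 0" using wle Ri wpos[of "h i"] by (intro mult_nonneg_nonneg) auto
    finally show "g i \<le> g (h i)" by simp
  qed
  have "sum g (S - S') \<le> sum (g \<circ> h) (S - S')" using ge by (intro sum_mono) auto
  also have "\<dots> = sum g (S' - S)" using sum.reindex_bij_betw[OF h, of g] by simp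
  finally have d: "sum g (S - S') \<le> sum g (S' - S)" .
  have "sum g S = sum g (S \<inter> S') + sum g (S - S')"
    using finS by (metis sum.Int_Diff)
  moreover have "sum g S' = sum g (S' \<inter> S) + sum g (S' - S)"
    unfolding S'_def by (metis sum.Int_Diff finite_atLeastAtMost)
  ultimately have "R \<le> sum g S'" using d sumgS by (simp add: Int_commute)
  hence "R * (1 + sum w S') \<le> sum a S'"
    unfolding g_def by (simp add: sum_subtractf sum_distrib_left[symmetric] algebra_simps)
  hence RS': "R \<le> re_hat \<theta> S'"
    unfolding reT using pos[of S'] unfolding S'_def by (simp add: le_divide_eq)
  show ?thesis unfolding is_opt_def
  proof (intro conjI allI impI)
    show "{1..k} \<subseteq> {1..n}" using kn by auto
    show "{1..k} \<noteq> {}" using k1 by auto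
    fix T assume "T \<subseteq> {1..n} \<and> T \<noteq> {}"
    hence "re_hat \<theta> T \<le> R" using Sopt R_def by auto
    thus "re_hat \<theta> T \<le> re_hat \<theta> {1..k}" using RS' S'_def by auto
  qed
qed

end
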